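(* Let $n>1$, $\epsilon\in(0,1)$, and integers $k<d$ with $d=\Omega(\log n)$. Assume the noise standard deviation satisfies $\sigma\le c\,\epsilon/\sqrt[4]{d\log n}$, where $c>0$ is a sufficiently small absolute constant. Consider the Gaussian-noise model described in the context. Then, with high probability, the nearest neighbor of $\tilde q$ in $\tilde P$ is $\tilde p^*$.
   Context: Gaussian-noise model. Let $U\subset\mathbb{R}^d$ be a linear subspace of dimension $k$. Let $P=\{p_1,\dots,p_n\}\subset U$ with $\|p_i\|\ge1$, and let $q\in U$. Suppose there exists $p^*\in P$ with $\|q-p^*\|\le 1$ and $\|q-p\|\ge 1+\epsilon$ for all $p\in P\setminus\{p^*\}$. Set $\tilde P=\{\tilde p_i=p_i+t_i\}$ and $\tilde q=q+t_q$, where $t_1,\dots,t_n,t_q$ are independent random vectors in $\mathbb{R}^d$ whose coordinates are independent $N(0,\sigma^2)$. Let $\tilde p^*$ be the perturbed version of $p^*$. "With high probability" means with probability at least $1-n^{-C}$ for a sufficiently large constant $C>0$. Norms are Euclidean. *)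

theory Defs
  imports "HOL-Probability.Probability"
begin

text \<open>Vectors of R^d are represented as functions nat => real; only the
coordinates 0..d-1 are relevant.\<close>

definition enorm :: "nat \<Rightarrow> (nat \<Rightarrow> real) \<Rightarrow> real" where
  "enorm d x = sqrt (\<Sum>j<d. (x j)\<^sup>2)"

definition edist :: "nat \<Rightarrow> (nat \<Rightarrow> real) \<Rightarrow> (nat \<Rightarrow> real) \<Rightarrow> real" where
  "edist d x y = sqrt (\<Sum>j<d. (x j - y j)\<^sup>2)"

definition lin_subspace_dim :: "nat \<Rightarrow> nat \<Rightarrow> (nat \<Rightarrow> real) set \<Rightarrow> bool" where
  "lin_subspace_dim d k U \<longleftrightarrow>
     (\<exists>b :: nat \<Rightarrow> nat \<Rightarrow> real.
        (\<forall>l<k. \<forall>j\<ge>d. b l j = 0) \<and>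
        (\<forall>a :: nat \<Rightarrow> real. (\<forall>j. (\<Sum>l<k. a l * b l j) = 0) \<longrightarrow> (\<forall>l<k. a l = 0)) \<and>
        U = {x. \<exists>a :: nat \<Rightarrow> real. x = (\<lambda>j. \<Sum>l<k. a l * b l j)})"

definition gauss :: "real \<Rightarrow> real measure" where
  "gauss \<sigma> = (if \<sigma> = 0 then return borel 0 else density lborel (normal_density 0 \<sigma>))"

text \<open>Noise space: coordinates (i,j), i \<le> n (i < n: data points, i = n: query), j < d.\<close>
definition noise_space :: "nat \<Rightarrow> nat \<Rightarrow> real \<Rightarrow> (nat \<times> nat \<Rightarrow> real) measure" where
  "noise_space n d \<sigma> = PiM ({..n} \<times> {..<d}) (\<lambda>_. gauss \<sigma>)"

definition perturb :: "nat \<Rightarrow> (nat \<times> nat \<Rightarrow> real) \<Rightarrow> nat \<Rightarrow> (nat \<Rightarrow> real) \<Rightarrow> (nat \<Rightarrow> real)" where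
  "perturb d \<omega> i x = (\<lambda>j. x j + (if j < d then \<omega> (i, j) else 0))"

end

theory Submission
  imports Defs
begin


lemma gauss_sets[simp, measurable_cong]: "sets (gauss \<sigma>) = sets borel"
  by (simp add: gauss_def)

lemma gauss_space[simp]: "space (gauss \<sigma>) = UNIV"
  by (simp add: gauss_def)

lemma gauss_prob: "\<sigma> \<ge> 0 \<Longrightarrow> prob_space (gauss \<sigma>)"
proof (cases "\<sigma> = 0")
  case True then show ?thesis by (simp add: gauss_def prob_space_return)
next
  case False
  assume "\<sigma> \<ge> 0"
  with False have "\<sigma> > 0" by simp
  then show ?thesis using prob_space_normal_density[of \<sigma> 0] False by (simp add: gauss_def)
qed

lemma normal_complete_square:
  fixes \<sigma> l c x :: real
  assumes s: "\<sigma> > 0" and r: "r = 1 - 2*l*\<sigma>\<^sup>2" "r > 0"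
  shows "normal_density 0 \<sigma> x * exp (l*(x+c)\<^sup>2) =
     exp (l*c\<^sup>2/r) / sqrt r * normal_density (2*l*c*\<sigma>\<^sup>2/r) (\<sigma> / sqrt r) x"
proof -
  have sr: "sqrt r > 0" using r by simp
  have e1: "(\<sigma> / sqrt r)\<^sup>2 = \<sigma>\<^sup>2 / r" using r by (simp add: power_divide)
  have sq: "sqrt (2*pi*(\<sigma>\<^sup>2/r)) = sqrt (2*pi*\<sigma>\<^sup>2) / sqrt r"
    by (simp add: real_sqrt_divide)
  have ex: "-(x - 0)\<^sup>2/(2*\<sigma>\<^sup>2) + l*(x+c)\<^sup>2 = l*c\<^sup>2/r + (-(x - 2*l*c*\<sigma>\<^sup>2/r)\<^sup>2/(2*(\<sigma>\<^sup>2/r)))"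
    using s r by (simp add: field_simps power2_eq_square) algebra
  have ee: "exp (-(x - 0)\<^sup>2/(2*\<sigma>\<^sup>2)) * exp (l*(x+c)\<^sup>2) = exp (l*c\<^sup>2/r) * exp (-(x - 2*l*c*\<sigma>\<^sup>2/r)\<^sup>2/(2*(\<sigma>\<^sup>2/r)))"
    by (simp only: exp_add[symmetric] ex)
  have p: "sqrt (2*pi*\<sigma>\<^sup>2) > 0" using s by simp
  show ?thesis
    unfolding normal_density_def e1 sq
    using sr p ee
    by (simp add: field_simps)
qed




lemma nn_integral_normal_density: "\<sigma> > 0 \<Longrightarrow> (\<integral>\<^sup>+x. ennreal (normal_density \<mu> \<sigma> x) \<partial>lborel) = 1"
  by (subst nn_integral_eq_integral) (auto intro: integrable_normal_density simp: integral_normal_density)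

lemma gauss_mgf:
  fixes \<sigma> l c :: real
  assumes s: "\<sigma> \<ge> 0" and r: "2*l*\<sigma>\<^sup>2 < 1"
  shows "(\<integral>\<^sup>+x. ennreal (exp (l*(x+c)\<^sup>2)) \<partial>gauss \<sigma>) =
     ennreal (exp (l*c\<^sup>2/(1-2*l*\<sigma>\<^sup>2)) / sqrt (1-2*l*\<sigma>\<^sup>2))"
proof (cases "\<sigma> = 0")
  case True then show ?thesis by (simp add: gauss_def nn_integral_return)
next
  case False
  with s have s': "\<sigma> > 0" by simp
  define rr where "rr = 1-2*l*\<sigma>\<^sup>2"
  have rr: "rr > 0" using r by (simp add: rr_def)
  have "(\<integral>\<^sup>+x. ennreal (exp (l*(x+c)\<^sup>2)) \<partial>gauss \<sigma>) =
        (\<integral>\<^sup>+x. ennreal (normal_density 0 \<sigma> x) * ennreal (exp (l*(x+c)\<^sup>2)) \<partial>lborel)"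
    using False by (simp add: gauss_def nn_integral_density)
  also have "\<dots> = (\<integral>\<^sup>+x. ennreal (exp (l*c\<^sup>2/rr) / sqrt rr) * ennreal (normal_density (2*l*c*\<sigma>\<^sup>2/rr) (\<sigma> / sqrt rr) x) \<partial>lborel)"
    apply (rule nn_integral_cong)
    apply (subst ennreal_mult[symmetric], simp, simp)
    apply (subst ennreal_mult[symmetric])
    using rr apply simp
    apply simp
    apply (subst normal_complete_square[OF s' rr_def rr])
    apply simp
    done
  also have "\<dots> = ennreal (exp (l*c\<^sup>2/rr) / sqrt rr)"
    using rr s' by (simp add: nn_integral_cmult nn_integral_normal_density)
  finally show ?thesis by (simp add: rr_def)
qed




lemma gauss_pps: "\<sigma> \<ge> 0 \<Longrightarrow> product_prob_space (\<lambda>_::nat\<times>nat. gauss \<sigma>)"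
  unfolding product_prob_space_def product_prob_space_axioms_def product_sigma_finite_def
  using gauss_prob prob_space_imp_sigma_finite by blast


lemma pim_mgf:
  fixes \<sigma> l :: real and a :: "nat \<Rightarrow> real"
  assumes s: "\<sigma> \<ge> 0" and R: "4*l*\<sigma>\<^sup>2 < 1" and i: "i < n"
  shows "(\<integral>\<^sup>+\<omega>. ennreal (exp (l * (\<Sum>j<d. (a j + \<omega> (n,j) - \<omega> (i,j))\<^sup>2))) \<partial>noise_space n d \<sigma>) =
     ennreal (\<Prod>j<d. exp (l*(a j)\<^sup>2/(1-4*l*\<sigma>\<^sup>2)) / sqrt (1-4*l*\<sigma>\<^sup>2))"
proof -
  let ?M = "\<lambda>_::nat\<times>nat. gauss \<sigma>"
  interpret product_prob_space ?M
    by (rule gauss_pps[OF s])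
  define r where "r = 1 - 2*l*\<sigma>\<^sup>2"
  define r2 where "r2 = 1 - 2*(l/r)*\<sigma>\<^sup>2"
  have r: "r > 0" using R s unfolding r_def
    by (cases "l \<ge> 0") (auto intro: add_pos_nonneg simp: mult_nonneg_nonneg mult_nonpos_nonneg)
  have rr2: "r * r2 = 1 - 4*l*\<sigma>\<^sup>2" using r unfolding r2_def r_def by (simp add: field_simps)
  have r2: "r2 > 0" using R rr2 r by (metis diff_gt_0_iff_gt zero_less_mult_pos)
  define h where "h c = exp (l*c\<^sup>2/r) / sqrt r" for c
  define I where "I = {..<n} \<times> {..<d}"
  define J where "J = {n} \<times> {..<d}"
  have IJ: "I \<inter> J = {}" "finite I" "finite J" "I \<union> J = {..n} \<times> {..<d}"
    unfolding I_def J_def by auto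
  have iI: "(i,j) \<in> I" if "j < d" for j using i that by (simp add: I_def)
  have nJ: "(n,j) \<in> J" if "j < d" for j using that by (simp add: J_def)
  have "(\<integral>\<^sup>+\<omega>. ennreal (exp (l * (\<Sum>j<d. (a j + \<omega> (n,j) - \<omega> (i,j))\<^sup>2))) \<partial>noise_space n d \<sigma>)
      = (\<integral>\<^sup>+\<omega>. (\<Prod>j<d. ennreal (exp (l * (a j + \<omega> (n,j) - \<omega> (i,j))\<^sup>2))) \<partial>PiM (I \<union> J) ?M)"
    unfolding noise_space_def IJ(4)
    by (simp add: sum_distrib_left exp_sum prod_ennreal)
  also have "\<dots> = (\<integral>\<^sup>+x. (\<integral>\<^sup>+y. (\<Prod>j<d. ennreal (exp (l * (a j + merge I J (x,y) (n,j) - merge I J (x,y) (i,j))\<^sup>2))) \<partial>PiM J ?M) \<partial>PiM I ?M)"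
    apply (rule product_nn_integral_fold[OF IJ(1-3)])
    apply measurable
    using iI nJ by (auto intro!: measurable_component_singleton)
  also have "\<dots> = (\<integral>\<^sup>+x. (\<integral>\<^sup>+y. (\<Prod>k\<in>J. ennreal (exp (l * (y k + (a (snd k) - x (i, snd k)))\<^sup>2))) \<partial>PiM J ?M) \<partial>PiM I ?M)"
  proof (intro nn_integral_cong)
    fix x y
    have "(\<Prod>j<d. ennreal (exp (l * (a j + merge I J (x,y) (n,j) - merge I J (x,y) (i,j))\<^sup>2)))
        = (\<Prod>j<d. ennreal (exp (l * (y (n,j) + (a j - x (i, j)))\<^sup>2)))"
      by (intro prod.cong refl) (simp add: iI nJ IJ(1) algebra_simps)
    also have "\<dots> = (\<Prod>k\<in>J. ennreal (exp (l * (y k + (a (snd k) - x (i, snd k)))\<^sup>2)))"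
      unfolding J_def by (rule prod.reindex_bij_witness[where i=snd and j="\<lambda>j. (n,j)"]) auto
    finally show "(\<Prod>j<d. ennreal (exp (l * (a j + merge I J (x,y) (n,j) - merge I J (x,y) (i,j))\<^sup>2))) =
      (\<Prod>k\<in>J. ennreal (exp (l * (y k + (a (snd k) - x (i, snd k)))\<^sup>2)))" .
  qed
  also have "\<dots> = (\<integral>\<^sup>+x. (\<Prod>k\<in>J. ennreal (h (a (snd k) - x (i, snd k)))) \<partial>PiM I ?M)"
  proof (intro nn_integral_cong)
    fix x
    show "(\<integral>\<^sup>+y. (\<Prod>k\<in>J. ennreal (exp (l * (y k + (a (snd k) - x (i, snd k)))\<^sup>2))) \<partial>PiM J ?M) =
      (\<Prod>k\<in>J. ennreal (h (a (snd k) - x (i, snd k))))"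
      apply (subst product_nn_integral_prod[OF IJ(3)])
      apply measurable
      apply (intro prod.cong refl)
      apply (subst gauss_mgf[OF s])
      using r apply (simp add: r_def)
      apply (simp add: h_def r_def)
      done
  qed
  also have "\<dots> = (\<integral>\<^sup>+x. (\<Prod>k\<in>I. (if fst k = i then ennreal (h (a (snd k) - x k)) else 1)) \<partial>PiM I ?M)"
  proof (intro nn_integral_cong)
    fix x :: "nat\<times>nat \<Rightarrow> real"
    have "(\<Prod>k\<in>I. (if fst k = i then ennreal (h (a (snd k) - x k)) else 1))
        = (\<Prod>k\<in>{i}\<times>{..<d}. ennreal (h (a (snd k) - x k)))"
      apply (subst prod.If_cases[OF IJ(2)])
      apply simp
      apply (intro prod.cong refl)
      using i by (auto simp: I_def)
    also have "\<dots> = (\<Prod>j<d. ennreal (h (a j - x (i,j))))"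
      by (rule prod.reindex_bij_witness[where i="\<lambda>j. (i,j)" and j=snd]) auto
    also have "\<dots> = (\<Prod>k\<in>J. ennreal (h (a (snd k) - x (i, snd k))))"
      unfolding J_def by (rule prod.reindex_bij_witness[where i=snd and j="\<lambda>j. (n,j)"]) auto
    finally show "(\<Prod>k\<in>J. ennreal (h (a (snd k) - x (i, snd k)))) = (\<Prod>k\<in>I. (if fst k = i then ennreal (h (a (snd k) - x k)) else 1))" by simp
  qed
  also have "\<dots> = (\<Prod>k\<in>I. (\<integral>\<^sup>+t. (if fst k = i then ennreal (h (a (snd k) - t)) else 1) \<partial>?M k))"
    apply (subst product_nn_integral_prod[OF IJ(2), symmetric])
    unfolding h_def by measurable
  also have "\<dots> = (\<Prod>k\<in>I. (if fst k = i then ennreal (exp (l*(a (snd k))\<^sup>2/(1-4*l*\<sigma>\<^sup>2)) / sqrt (1-4*l*\<sigma>\<^sup>2)) else 1))"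
  proof (intro prod.cong refl)
    fix k assume "k \<in> I"
    show "(\<integral>\<^sup>+t. (if fst k = i then ennreal (h (a (snd k) - t)) else 1) \<partial>?M k) =
      (if fst k = i then ennreal (exp (l*(a (snd k))\<^sup>2/(1-4*l*\<sigma>\<^sup>2)) / sqrt (1-4*l*\<sigma>\<^sup>2)) else 1)"
    proof (cases "fst k = i")
      case False then show ?thesis using M.emeasure_space_1 by simp
    next
      case True
      define b where "b = a (snd k)"
      have "(\<integral>\<^sup>+t. ennreal (h (b - t)) \<partial>gauss \<sigma>) = (\<integral>\<^sup>+t. ennreal (1/sqrt r) * ennreal (exp ((l/r)*(t + (-b))\<^sup>2)) \<partial>gauss \<sigma>)"
        apply (intro nn_integral_cong)
        apply (subst ennreal_mult'[symmetric])
        using r apply simp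
        apply (simp add: h_def power2_commute)
        done
      also have "\<dots> = ennreal (1/sqrt r) * ennreal (exp ((l/r)*(-b)\<^sup>2/r2) / sqrt r2)"
        apply (subst nn_integral_cmult, measurable)
        apply (subst gauss_mgf[OF s])
        using r2 apply (simp add: r2_def)
        apply (simp add: r2_def)
        done
      also have "\<dots> = ennreal (exp (l*b\<^sup>2/(1-4*l*\<sigma>\<^sup>2)) / sqrt (1-4*l*\<sigma>\<^sup>2))"
        apply (subst ennreal_mult'[symmetric])
        using r apply simp
        apply (rule arg_cong[where f=ennreal])
        unfolding rr2[symmetric] using r r2
        by (simp add: real_sqrt_mult field_simps)
      finally show ?thesis using True by (simp add: b_def)
    qed
  qed
  also have "\<dots> = (\<Prod>k\<in>{i}\<times>{..<d}. ennreal (exp (l*(a (snd k))\<^sup>2/(1-4*l*\<sigma>\<^sup>2)) / sqrt (1-4*l*\<sigma>\<^sup>2)))"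
      apply (subst prod.If_cases[OF IJ(2)])
      apply simp
      apply (intro prod.cong refl)
      using i by (auto simp: I_def)
  also have "\<dots> = (\<Prod>j<d. ennreal (exp (l*(a j)\<^sup>2/(1-4*l*\<sigma>\<^sup>2)) / sqrt (1-4*l*\<sigma>\<^sup>2)))"
    by (rule prod.reindex_bij_witness[where i="\<lambda>j. (i,j)" and j=snd]) auto
  also have "\<dots> = ennreal (\<Prod>j<d. exp (l*(a j)\<^sup>2/(1-4*l*\<sigma>\<^sup>2)) / sqrt (1-4*l*\<sigma>\<^sup>2))"
    using R by (intro prod_ennreal) simp
  finally show ?thesis .
qed




lemma markov_exp:
  assumes P: "prob_space M" and g[measurable]: "g \<in> borel_measurable M"
    and B: "(\<integral>\<^sup>+x. ennreal (exp (g x)) \<partial>M) = ennreal B" "B \<ge> 0"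
  shows "measure M {x\<in>space M. t \<le> g x} \<le> B / exp t"
proof -
  interpret prob_space M by (rule P)
  define A where "A = {x\<in>space M. t \<le> g x}"
  have Am[measurable]: "A \<in> sets M" unfolding A_def by measurable
  have "ennreal (exp t) * emeasure M A = (\<integral>\<^sup>+x. ennreal (exp t) * indicator A x \<partial>M)"
    using Am by (simp add: nn_integral_cmult_indicator)
  also have "\<dots> \<le> (\<integral>\<^sup>+x. ennreal (exp (g x)) \<partial>M)"
    by (intro nn_integral_mono) (auto simp: A_def indicator_def)
  finally have "ennreal (exp t * measure M A) \<le> ennreal B"
    using B by (simp add: emeasure_eq_measure ennreal_mult)
  then have "exp t * measure M A \<le> B" using B(2) by (simp add: ennreal_le_iff)
  then show ?thesis unfolding A_def[symmetric] by (simp add: le_divide_eq algebra_simps)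
qed

lemma prod_exp_sqrt:
  assumes R: "R > 0"
  shows "(\<Prod>j<d. exp (l*(a j)\<^sup>2/R) / sqrt R) = exp (l * (\<Sum>j<d. (a j)\<^sup>2) / R - real d / 2 * ln R)"
proof -
  have "\<And>j. exp (l*(a j)\<^sup>2/R) / sqrt R = exp (l*(a j)\<^sup>2/R - ln R / 2)"
  proof -
    fix j
    have "exp (ln R / 2) ^ 2 = R" using R by (simp add: power2_eq_square exp_add[symmetric])
    then have "sqrt R = exp (ln R / 2)" by (intro real_sqrt_unique) auto
    then show "exp (l*(a j)\<^sup>2/R) / sqrt R = exp (l*(a j)\<^sup>2/R - ln R / 2)" by (simp add: exp_diff)
  qed
  then have "(\<Prod>j<d. exp (l*(a j)\<^sup>2/R) / sqrt R) = exp (\<Sum>j<d. l*(a j)\<^sup>2/R - ln R / 2)"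
    by (simp add: exp_sum)
  also have "(\<Sum>j<d. l*(a j)\<^sup>2/R - ln R / 2) = l * (\<Sum>j<d. (a j)\<^sup>2) / R - real d / 2 * ln R"
    by (simp add: sum_subtractf sum_divide_distrib sum_distrib_left)
  finally show ?thesis .
qed




lemma noise_prob: "\<sigma> \<ge> 0 \<Longrightarrow> prob_space (noise_space n d \<sigma>)"
  unfolding noise_space_def by (intro prob_space_PiM gauss_prob)

lemma analytic_A:
  fixes l \<sigma> \<epsilon> B :: real
  assumes l: "l > 0" and s: "\<sigma> \<ge> 0" and e: "\<epsilon> > 0" "\<epsilon> < 1"
    and c1: "96*l*\<sigma>\<^sup>2 \<le> \<epsilon>" and c2: "64*d*l*\<sigma>^4 \<le> \<epsilon>" and B: "B \<le> 1" "B \<ge> 0"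
  shows "l*B/(1-4*l*\<sigma>\<^sup>2) - real d/2*ln (1-4*l*\<sigma>\<^sup>2) - l*(1+\<epsilon>+2*d*\<sigma>\<^sup>2) \<le> -(l*\<epsilon>/2)"
proof -
  define y where "y = \<sigma>\<^sup>2"
  have y: "y \<ge> 0" "\<sigma>^4 = y\<^sup>2" unfolding y_def by (auto simp: power_mult[symmetric])
  define x where "x = 4*l*y"
  have x: "0 \<le> x" "x \<le> 1/12" using c1 e l y unfolding x_def y_def by auto
  have ln: "ln (1-x) \<ge> -x - 2*x\<^sup>2" using ln_one_minus_pos_lower_bound[of x] x by simp
  have xx: "x*(2*x) \<le> x*1" using x by (intro mult_left_mono) auto
  have R: "1/(1-x) \<le> 1 + 2*x" using x xx by (simp add: field_simps)
  have t1: "l*B/(1-x) \<le> l*(1+2*x)"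
  proof -
    have "l*B/(1-x) = (l*B) * (1/(1-x))" by simp
    also have "\<dots> \<le> (l*1) * (1+2*x)" using R B l x
      by (intro mult_mono mult_left_mono) auto
    finally show ?thesis by simp
  qed
  have "real d * (-ln (1-x)) \<le> real d * (x+2*x\<^sup>2)" using ln by (intro mult_left_mono) auto
  then have t2: "- real d/2*ln (1-x) \<le> real d/2*(x+2*x\<^sup>2)" by simp
  have c1': "8*l*y \<le> \<epsilon>/12" using c1 unfolding y_def by simp
  have c2': "16*real d*l*y\<^sup>2 \<le> \<epsilon>/4" using c2 y by simp
  have "l*(1+2*x) + real d/2*(x+2*x\<^sup>2) - l*(1+\<epsilon>+2*real d*y) = l*(8*l*y) + l*(16*real d*l*y\<^sup>2) - l*\<epsilon>"
    unfolding x_def by (simp add: algebra_simps power2_eq_square)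
  also have "\<dots> \<le> l*(\<epsilon>/12) + l*(\<epsilon>/4) - l*\<epsilon>"
    using c1' c2' l by (intro diff_right_mono add_mono mult_left_mono) auto
  also have "\<dots> \<le> -(l*\<epsilon>/2)" using l e by simp
  finally have "l*(1+2*x) + real d/2*(x+2*x\<^sup>2) - l*(1+\<epsilon>+2*real d*y) \<le> -(l*\<epsilon>/2)" .
  then show ?thesis using t1 t2 unfolding x_def y_def by linarith
qed

lemma analytic_B:
  fixes l \<sigma> \<epsilon> A :: real
  assumes l: "l > 0" and s: "\<sigma> \<ge> 0" and e: "\<epsilon> > 0" "\<epsilon> < 1"
    and c1: "96*l*\<sigma>\<^sup>2 \<le> \<epsilon>" and c2: "64*d*l*\<sigma>^4 \<le> \<epsilon>" and A: "A \<ge> 1 + 2*\<epsilon>"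
  shows "-l*A/(1+4*l*\<sigma>\<^sup>2) - real d/2*ln (1+4*l*\<sigma>\<^sup>2) + l*(1+\<epsilon>+2*d*\<sigma>\<^sup>2) \<le> -(l*\<epsilon>/2)"
proof -
  define y where "y = \<sigma>\<^sup>2"
  have y: "y \<ge> 0" "\<sigma>^4 = y\<^sup>2" unfolding y_def by (auto simp: power_mult[symmetric])
  define x where "x = 4*l*y"
  have x: "0 \<le> x" "x \<le> 1/12" using c1 e l y unfolding x_def y_def by auto
  have ln: "ln (1+x) \<ge> x - x\<^sup>2" using ln_one_plus_pos_lower_bound[of x] x by simp
  have xx: "0 \<le> x*x" using x by simp
  have R: "1/(1+x) \<ge> 1 - x" using x xx by (simp add: field_simps)
  have t1: "-l*A/(1+x) \<le> -l*(1+2*\<epsilon>)*(1-x)"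
  proof -
    have "l*(1+2*\<epsilon>)*(1-x) \<le> l*A*(1/(1+x))"
      using R A l x e by (intro mult_mono mult_left_mono) auto
    then show ?thesis by simp
  qed
  have t2: "- real d/2*ln (1+x) \<le> - real d/2*(x-x\<^sup>2)"
    using ln by (simp add: mult_left_mono)
  have c1': "12*l*y \<le> \<epsilon>/8" using c1 unfolding y_def by simp
  have c2': "8*real d*l*y\<^sup>2 \<le> \<epsilon>/8" using c2 y by simp
  have ex: "\<epsilon>*x \<le> 1*x" using e x by (intro mult_right_mono) auto
  have ex2: "l*(2*(\<epsilon>*x)) \<le> l*(2*(1*x))" using ex l by (intro mult_left_mono) auto
  have eq: "-l*(1+2*\<epsilon>)*(1-x) - real d/2*(x-x\<^sup>2) + l*(1+\<epsilon>+2*real d*y) = -(l*\<epsilon>) + l*x + l*(2*(\<epsilon>*x)) + l*(8*real d*l*y\<^sup>2)"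
    unfolding x_def by (simp add: algebra_simps power2_eq_square)
  have "-l*(1+2*\<epsilon>)*(1-x) - real d/2*(x-x\<^sup>2) + l*(1+\<epsilon>+2*real d*y) \<le> l*(3*x) + l*(8*real d*l*y\<^sup>2) - l*\<epsilon>"
    unfolding eq using ex2 by (simp add: algebra_simps)
  also have "\<dots> = l*(12*l*y) + l*(8*real d*l*y\<^sup>2) - l*\<epsilon>" unfolding x_def by simp
  also have "\<dots> \<le> l*(\<epsilon>/8) + l*(\<epsilon>/8) - l*\<epsilon>"
    using c1' c2' l by (intro diff_right_mono add_mono mult_left_mono) auto
  also have "\<dots> \<le> -(l*\<epsilon>/2)" using l e by simp
  finally have "-l*(1+2*\<epsilon>)*(1-x) - real d/2*(x-x\<^sup>2) + l*(1+\<epsilon>+2*real d*y) \<le> -(l*\<epsilon>/2)" .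
  then show ?thesis using t1 t2 unfolding x_def y_def by linarith
qed




lemma S_meas:
  assumes "i \<le> n"
  shows "(\<lambda>\<omega>. l * (\<Sum>j<d. (b j + \<omega> (n,j) - \<omega> (i,j))\<^sup>2)) \<in> borel_measurable (noise_space n d \<sigma>)"
  unfolding noise_space_def
  apply measurable
  using assms by (auto intro!: measurable_component_singleton)

lemma tail_A:
  fixes b :: "nat \<Rightarrow> real"
  assumes s: "\<sigma> \<ge> 0" and i: "i < n" and l: "l > 0" and e: "\<epsilon> > 0" "\<epsilon> < 1"
    and c1: "96*l*\<sigma>\<^sup>2 \<le> \<epsilon>" and c2: "64*real d*l*\<sigma>^4 \<le> \<epsilon>" and B: "(\<Sum>j<d. (b j)\<^sup>2) \<le> 1"
  shows "measure (noise_space n d \<sigma>) {\<omega>\<in>space (noise_space n d \<sigma>).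
           1+\<epsilon>+2*real d*\<sigma>\<^sup>2 \<le> (\<Sum>j<d. (b j + \<omega> (n,j) - \<omega> (i,j))\<^sup>2)} \<le> exp (-(l*\<epsilon>/2))"
proof -
  define T where "T = 1+\<epsilon>+2*real d*\<sigma>\<^sup>2"
  define R where "R = 1-4*l*\<sigma>\<^sup>2"
  have R: "R > 0" using c1 e l s unfolding R_def by simp
  have "{\<omega>\<in>space (noise_space n d \<sigma>). T \<le> (\<Sum>j<d. (b j + \<omega> (n,j) - \<omega> (i,j))\<^sup>2)}
      = {\<omega>\<in>space (noise_space n d \<sigma>). l*T \<le> l*(\<Sum>j<d. (b j + \<omega> (n,j) - \<omega> (i,j))\<^sup>2)}"
    using l by simp
  also have "measure (noise_space n d \<sigma>) \<dots> \<le> (\<Prod>j<d. exp (l*(b j)\<^sup>2/R) / sqrt R) / exp (l*T)"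
    apply (rule markov_exp[OF noise_prob[OF s] S_meas])
    using i apply simp
    unfolding R_def
     apply (rule pim_mgf[OF s _ i])
    using R R_def apply simp
    using R by (auto simp: R_def intro!: prod_nonneg)
  also have "\<dots> = exp (l * (\<Sum>j<d. (b j)\<^sup>2) / R - real d / 2 * ln R - l*T)"
    using R by (simp add: prod_exp_sqrt exp_diff)
  also have "\<dots> \<le> exp (-(l*\<epsilon>/2))"
    unfolding R_def T_def using analytic_A[OF l s e c1 c2 B sum_nonneg] by simp
  finally show ?thesis unfolding T_def .
qed

lemma tail_B:
  fixes a :: "nat \<Rightarrow> real"
  assumes s: "\<sigma> \<ge> 0" and i: "i < n" and l: "l > 0" and e: "\<epsilon> > 0" "\<epsilon> < 1"
    and c1: "96*l*\<sigma>\<^sup>2 \<le> \<epsilon>" and c2: "64*real d*l*\<sigma>^4 \<le> \<epsilon>" and A: "(\<Sum>j<d. (a j)\<^sup>2) \<ge> 1 + 2*\<epsilon>"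
  shows "measure (noise_space n d \<sigma>) {\<omega>\<in>space (noise_space n d \<sigma>).
           (\<Sum>j<d. (a j + \<omega> (n,j) - \<omega> (i,j))\<^sup>2) \<le> 1+\<epsilon>+2*real d*\<sigma>\<^sup>2} \<le> exp (-(l*\<epsilon>/2))"
proof -
  define T where "T = 1+\<epsilon>+2*real d*\<sigma>\<^sup>2"
  define R where "R = 1-4*(-l)*\<sigma>\<^sup>2"
  have R: "R > 0" using l s unfolding R_def by (simp add: add_pos_nonneg)
  have "{\<omega>\<in>space (noise_space n d \<sigma>). (\<Sum>j<d. (a j + \<omega> (n,j) - \<omega> (i,j))\<^sup>2) \<le> T}
      = {\<omega>\<in>space (noise_space n d \<sigma>). (-l)*T \<le> (-l)*(\<Sum>j<d. (a j + \<omega> (n,j) - \<omega> (i,j))\<^sup>2)}"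
    using l by simp
  also have "measure (noise_space n d \<sigma>) \<dots> \<le> (\<Prod>j<d. exp ((-l)*(a j)\<^sup>2/R) / sqrt R) / exp ((-l)*T)"
    apply (rule markov_exp[OF noise_prob[OF s] S_meas])
    using i apply simp
    unfolding R_def
     apply (rule pim_mgf[OF s _ i])
    using R R_def apply simp
    using R by (auto simp: R_def intro!: prod_nonneg)
  also have "\<dots> = exp ((-l) * (\<Sum>j<d. (a j)\<^sup>2) / R - real d / 2 * ln R + l*T)"
    by (simp only: prod_exp_sqrt[OF R] exp_diff[symmetric]) simp
  also have "\<dots> \<le> exp (-(l*\<epsilon>/2))"
    unfolding R_def T_def using analytic_B[OF l s e c1 c2 A] by simp
  finally show ?thesis unfolding T_def .
qed




lemma edist_perturb:
  "edist d (perturb d \<omega> n q) (perturb d \<omega> i x) = sqrt (\<Sum>j<d. ((q j - x j) + \<omega> (n,j) - \<omega> (i,j))\<^sup>2)"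
  unfolding edist_def perturb_def
  by (intro arg_cong[where f=sqrt] sum.cong refl) (simp add: algebra_simps)

lemma main_prob:
  fixes p :: "nat \<Rightarrow> nat \<Rightarrow> real"
  assumes s: "\<sigma> \<ge> 0" and l: "l > 0" and e: "\<epsilon> > 0" "\<epsilon> < 1"
    and c1: "96*l*\<sigma>\<^sup>2 \<le> \<epsilon>" and c2: "64*real d*l*\<sigma>^4 \<le> \<epsilon>"
    and i0: "i0 < n" and H1: "edist d q (p i0) \<le> 1"
    and H2: "\<forall>i<n. i \<noteq> i0 \<longrightarrow> edist d q (p i) \<ge> 1 + \<epsilon>"
  shows "measure (noise_space n d \<sigma>)
         {\<omega> \<in> space (noise_space n d \<sigma>).
            \<forall>i<n. i \<noteq> i0 \<longrightarrow>
              edist d (perturb d \<omega> n q) (perturb d \<omega> i0 (p i0))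
                < edist d (perturb d \<omega> n q) (perturb d \<omega> i (p i))}
       \<ge> 1 - real n * exp (-(l*\<epsilon>/2))"
proof -
  let ?N = "noise_space n d \<sigma>"
  interpret prob_space ?N by (rule noise_prob[OF s])
  define a where "a i j = q j - p i j" for i j
  define E where "E i \<omega> = (\<Sum>j<d. (a i j + \<omega> (n,j) - \<omega> (i,j))\<^sup>2)" for i \<omega>
  define T where "T = 1+\<epsilon>+2*real d*\<sigma>\<^sup>2"
  define Bd where "Bd i = (if i = i0 then {\<omega>\<in>space ?N. T \<le> E i0 \<omega>} else {\<omega>\<in>space ?N. E i \<omega> \<le> T})" for i
  define G where "G = {\<omega> \<in> space ?N. \<forall>i<n. i \<noteq> i0 \<longrightarrow>
              edist d (perturb d \<omega> n q) (perturb d \<omega> i0 (p i0))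
                < edist d (perturb d \<omega> n q) (perturb d \<omega> i (p i))}"
  have Eeq: "edist d (perturb d \<omega> n q) (perturb d \<omega> i (p i)) = sqrt (E i \<omega>)" for \<omega> i
    unfolding edist_perturb E_def a_def ..
  have Emeas[measurable]: "E i \<in> borel_measurable ?N" if "i < n" for i
    using S_meas[of i n 1 "a i" d \<sigma>] that unfolding E_def by simp
  have Bdm: "Bd i \<in> sets ?N" if "i < n" for i
    unfolding Bd_def using that i0 by auto
  have Gm: "G \<in> sets ?N"
  proof -
    have "G = {\<omega> \<in> space ?N. \<forall>i\<in>{..<n}. i \<noteq> i0 \<longrightarrow> E i0 \<omega> < E i \<omega>}"
      unfolding G_def Eeq by auto
    also have "\<dots> \<in> sets ?N" using i0 by measurable
    finally show ?thesis .
  qed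
  have sub: "space ?N - (\<Union>i\<in>{..<n}. Bd i) \<subseteq> G"
  proof
    fix \<omega> assume w: "\<omega> \<in> space ?N - (\<Union>i\<in>{..<n}. Bd i)"
    then have w1: "\<omega> \<in> space ?N" and w2: "\<And>i. i < n \<Longrightarrow> \<omega> \<notin> Bd i" by auto
    have "E i0 \<omega> < T" using w1 w2[OF i0] unfolding Bd_def by auto
    moreover have "T < E i \<omega>" if "i < n" "i \<noteq> i0" for i using w1 w2[OF that(1)] that(2) unfolding Bd_def by auto
    ultimately have "sqrt (E i0 \<omega>) < sqrt (E i \<omega>)" if "i < n" "i \<noteq> i0" for i
      using that by (meson order.strict_trans real_sqrt_less_iff)
    then show "\<omega> \<in> G" unfolding G_def Eeq using w1 by auto
  qed
  have bnd: "measure ?N (Bd i) \<le> exp (-(l*\<epsilon>/2))" if "i < n" for i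
  proof (cases "i = i0")
    case True
    have "(\<Sum>j<d. (a i0 j)\<^sup>2) \<le> 1"
      using H1 unfolding edist_def a_def by simp
    then show ?thesis using True tail_A[OF s i0 l e c1 c2, of "a i0"]
      unfolding Bd_def E_def T_def by simp
  next
    case False
    have "1 + \<epsilon> \<le> sqrt (\<Sum>j<d. (a i j)\<^sup>2)" using H2 that False unfolding edist_def a_def by auto
    then have "(1+\<epsilon>)\<^sup>2 \<le> (sqrt (\<Sum>j<d. (a i j)\<^sup>2))\<^sup>2" using e by (intro power_mono) auto
    then have "(1+\<epsilon>)\<^sup>2 \<le> (\<Sum>j<d. (a i j)\<^sup>2)" by (simp add: sum_nonneg)
    moreover have "1 + 2*\<epsilon> \<le> (1+\<epsilon>)\<^sup>2" by (simp add: power2_eq_square algebra_simps)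
    ultimately have "1 + 2*\<epsilon> \<le> (\<Sum>j<d. (a i j)\<^sup>2)" by linarith
    then show ?thesis using False tail_B[OF s that l e c1 c2, of "a i"]
      unfolding Bd_def E_def T_def by simp
  qed
  have "measure ?N (\<Union>i\<in>{..<n}. Bd i) \<le> (\<Sum>i<n. measure ?N (Bd i))"
    by (rule finite_measure_subadditive_finite) (auto simp: Bdm)
  also have "\<dots> \<le> (\<Sum>i<n. exp (-(l*\<epsilon>/2)))" by (intro sum_mono bnd) auto
  also have "\<dots> = real n * exp (-(l*\<epsilon>/2))" by simp
  finally have U: "measure ?N (\<Union>i\<in>{..<n}. Bd i) \<le> real n * exp (-(l*\<epsilon>/2))" .
  have Um: "(\<Union>i\<in>{..<n}. Bd i) \<in> sets ?N" using Bdm by auto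
  have "1 - real n * exp (-(l*\<epsilon>/2)) \<le> measure ?N (space ?N - (\<Union>i\<in>{..<n}. Bd i))"
    using prob_compl[OF Um] U by simp
  also have "\<dots> \<le> measure ?N G" by (rule finite_measure_mono[OF sub Gm])
  finally show ?thesis unfolding G_def .
qed




lemma pow4_powr: "x > 0 \<Longrightarrow> (x powr (1/4)) ^ 4 = (x::real)"
  by (simp add: powr_power)

theorem lemma2p3:
  "\<forall>C::real>0. \<forall>c0::real>0. \<exists>c::real>0.
     \<forall>(n::nat) (d::nat) (k::nat) (U :: (nat \<Rightarrow> real) set) (p :: nat \<Rightarrow> nat \<Rightarrow> real)
       (q :: nat \<Rightarrow> real) (i0::nat) (\<epsilon>::real) (\<sigma>::real).
       n > 1 \<and> 0 < \<epsilon> \<and> \<epsilon> < 1 \<and> k < d \<and> real d \<ge> c0 * ln (real n) \<and>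
       0 \<le> \<sigma> \<and> \<sigma> \<le> c * \<epsilon> / (real d * ln (real n)) powr (1/4) \<and>
       lin_subspace_dim d k U \<and>
       inj_on p {..<n} \<and> (\<forall>i<n. p i \<in> U \<and> enorm d (p i) \<ge> 1) \<and> q \<in> U \<and>
       i0 < n \<and> edist d q (p i0) \<le> 1 \<and>
       (\<forall>i<n. i \<noteq> i0 \<longrightarrow> edist d q (p i) \<ge> 1 + \<epsilon>)
       \<longrightarrow>
       measure (noise_space n d \<sigma>)
         {\<omega> \<in> space (noise_space n d \<sigma>).
            \<forall>i<n. i \<noteq> i0 \<longrightarrow>
              edist d (perturb d \<omega> n q) (perturb d \<omega> i0 (p i0))
                < edist d (perturb d \<omega> n q) (perturb d \<omega> i (p i))}
       \<ge> 1 - real n powr (-C)"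
proof (intro allI impI)
  fix C c0 :: real
  assume C: "C > 0" and c0: "c0 > 0"
  define K where "K = 2*C+2"
  have K: "K > 0" using C by (simp add: K_def)
  define c4 where "c4 = min (c0/(96*K)\<^sup>2) (1/(64*K))"
  have c4: "c4 > 0" "c4 \<le> c0/(96*K)\<^sup>2" "c4 \<le> 1/(64*K)" using K c0 by (auto simp: c4_def)
  define c where "c = c4 powr (1/4)"
  have c: "c > 0" "c^4 = c4" using c4 by (auto simp: c_def pow4_powr)
  show "\<exists>c::real>0.
     \<forall>(n::nat) (d::nat) (k::nat) (U :: (nat \<Rightarrow> real) set) (p :: nat \<Rightarrow> nat \<Rightarrow> real)
       (q :: nat \<Rightarrow> real) (i0::nat) (\<epsilon>::real) (\<sigma>::real).
       n > 1 \<and> 0 < \<epsilon> \<and> \<epsilon> < 1 \<and> k < d \<and> real d \<ge> c0 * ln (real n) \<and>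
       0 \<le> \<sigma> \<and> \<sigma> \<le> c * \<epsilon> / (real d * ln (real n)) powr (1/4) \<and>
       lin_subspace_dim d k U \<and>
       inj_on p {..<n} \<and> (\<forall>i<n. p i \<in> U \<and> enorm d (p i) \<ge> 1) \<and> q \<in> U \<and>
       i0 < n \<and> edist d q (p i0) \<le> 1 \<and>
       (\<forall>i<n. i \<noteq> i0 \<longrightarrow> edist d q (p i) \<ge> 1 + \<epsilon>)
       \<longrightarrow>
       measure (noise_space n d \<sigma>)
         {\<omega> \<in> space (noise_space n d \<sigma>).
            \<forall>i<n. i \<noteq> i0 \<longrightarrow>
              edist d (perturb d \<omega> n q) (perturb d \<omega> i0 (p i0))
                < edist d (perturb d \<omega> n q) (perturb d \<omega> i (p i))}
       \<ge> 1 - real n powr (-C)"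
  proof (intro exI[of _ c] conjI c(1) allI impI)
    fix n d k :: nat and U :: "(nat \<Rightarrow> real) set" and p :: "nat \<Rightarrow> nat \<Rightarrow> real"
      and q :: "nat \<Rightarrow> real" and i0 :: nat and \<epsilon> \<sigma> :: real
    assume H: "n > 1 \<and> 0 < \<epsilon> \<and> \<epsilon> < 1 \<and> k < d \<and> real d \<ge> c0 * ln (real n) \<and>
       0 \<le> \<sigma> \<and> \<sigma> \<le> c * \<epsilon> / (real d * ln (real n)) powr (1/4) \<and>
       lin_subspace_dim d k U \<and>
       inj_on p {..<n} \<and> (\<forall>i<n. p i \<in> U \<and> enorm d (p i) \<ge> 1) \<and> q \<in> U \<and>
       i0 < n \<and> edist d q (p i0) \<le> 1 \<and>
       (\<forall>i<n. i \<noteq> i0 \<longrightarrow> edist d q (p i) \<ge> 1 + \<epsilon>)"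
    then have n: "n > 1" and e: "0 < \<epsilon>" "\<epsilon> < 1" and kd: "k < d" and dL: "real d \<ge> c0 * ln (real n)"
      and s: "0 \<le> \<sigma>" and sc: "\<sigma> \<le> c * \<epsilon> / (real d * ln (real n)) powr (1/4)"
      and i0: "i0 < n" and H1: "edist d q (p i0) \<le> 1"
      and H2: "\<forall>i<n. i \<noteq> i0 \<longrightarrow> edist d q (p i) \<ge> 1 + \<epsilon>" by auto
    define L where "L = ln (real n)"
    have L: "L > 0" using n by (simp add: L_def)
    define D where "D = real d * L"
    have D: "D > 0" using L kd by (simp add: D_def)
    define l where "l = K*L/\<epsilon>"
    have l: "l > 0" using K L e by (simp add: l_def)
    have D4: "D powr (1/4) > 0" using D by simp
    have "\<sigma> * D powr (1/4) \<le> c * \<epsilon>" using sc D4 unfolding D_def L_def by (simp add: pos_le_divide_eq)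
    then have "(\<sigma> * D powr (1/4))^4 \<le> (c*\<epsilon>)^4" using s by (intro power_mono) auto
    then have F: "\<sigma>^4 * D \<le> c4 * \<epsilon>^4" using D c by (simp add: power_mult_distrib pow4_powr)
    have s4: "\<sigma>^4 \<ge> 0" using s by simp
    have c2: "64*real d*l*\<sigma>^4 \<le> \<epsilon>"
    proof -
      have "64*real d*l*\<sigma>^4 = 64*K*(\<sigma>^4*D)/\<epsilon>" unfolding l_def D_def by (simp add: field_simps)
      also have "\<dots> \<le> 64*K*(c4*\<epsilon>^4)/\<epsilon>" using F K e by (intro divide_right_mono mult_left_mono) auto
      also have "\<dots> = (64*K*c4)*\<epsilon>^3" using e by (simp add: power_def field_simps)
      also have "\<dots> \<le> 1*\<epsilon>^3" using c4 K e by (intro mult_right_mono) (auto simp: field_simps)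
      also have "\<dots> \<le> \<epsilon>" using e by (simp add: power_le_one power3_eq_cube)
        (metis less_eq_real_def mult_le_one mult_left_le e(1) e(2) zero_le_mult_iff)
      finally show ?thesis .
    qed
    have c1: "96*l*\<sigma>\<^sup>2 \<le> \<epsilon>"
    proof -
      have "L^2*\<sigma>^4*c0 = L*\<sigma>^4*(c0*L)" by (simp add: power2_eq_square)
      also have "\<dots> \<le> L*\<sigma>^4*real d" using dL L s4 unfolding L_def by (intro mult_left_mono) auto
      also have "\<dots> = \<sigma>^4*D" unfolding D_def by simp
      also have "\<dots> \<le> c4*\<epsilon>^4" by (rule F)
      finally have a: "L^2*\<sigma>^4*c0 \<le> c4*\<epsilon>^4" .
      have "(96*K)\<^sup>2*(L^2*\<sigma>^4*c0) \<le> (96*K)\<^sup>2*(c4*\<epsilon>^4)" using a by (intro mult_left_mono) auto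
      then have "(96*K)\<^sup>2*(L^2*\<sigma>^4)*c0 \<le> (96*K)\<^sup>2*(c4*\<epsilon>^4)" by (simp add: mult.assoc)
      also have "\<dots> \<le> (96*K)\<^sup>2*(c0/(96*K)\<^sup>2*\<epsilon>^4)" using c4 by (intro mult_left_mono mult_right_mono) auto
      also have "\<dots> = c0*\<epsilon>^4" using K by simp
      finally have "((96*K)\<^sup>2*(L^2*\<sigma>^4))*c0 \<le> \<epsilon>^4*c0" by (simp add: mult.commute)
      then have b: "(96*K)\<^sup>2*(L^2*\<sigma>^4) \<le> \<epsilon>^4" using c0 by simp
      have "(96*K*L*\<sigma>\<^sup>2)\<^sup>2 \<le> (\<epsilon>\<^sup>2)\<^sup>2" using b by (simp add: power_mult_distrib power_mult[symmetric] mult.assoc)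
      then have "96*K*L*\<sigma>\<^sup>2 \<le> \<epsilon>\<^sup>2" by (rule power2_le_imp_le) simp
      then show ?thesis unfolding l_def using e by (simp add: field_simps power2_eq_square)
    qed
    have main: "measure (noise_space n d \<sigma>)
         {\<omega> \<in> space (noise_space n d \<sigma>).
            \<forall>i<n. i \<noteq> i0 \<longrightarrow>
              edist d (perturb d \<omega> n q) (perturb d \<omega> i0 (p i0))
                < edist d (perturb d \<omega> n q) (perturb d \<omega> i (p i))}
       \<ge> 1 - real n * exp (-(l*\<epsilon>/2))"
      by (rule main_prob[OF s l e c1 c2 i0 H1 H2])
    have nL: "real n = exp L" using n by (simp add: L_def)
    have le: "l*\<epsilon>/2 = (C+1)*L" using e unfolding l_def K_def by (simp add: field_simps)
    have "real n * exp (-(l*\<epsilon>/2)) = exp (L + (-((C+1)*L)))" unfolding le nL exp_add by simp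
    also have "\<dots> = exp (-C * L)" by (simp add: algebra_simps)
    also have "\<dots> = real n powr (-C)"
      using n unfolding L_def powr_def by simp
    finally show "measure (noise_space n d \<sigma>)
         {\<omega> \<in> space (noise_space n d \<sigma>).
            \<forall>i<n. i \<noteq> i0 \<longrightarrow>
              edist d (perturb d \<omega> n q) (perturb d \<omega> i0 (p i0))
                < edist d (perturb d \<omega> n q) (perturb d \<omega> i (p i))}
       \<ge> 1 - real n powr (-C)" using main by simp
  qed
qed


end
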